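(* Let $\varepsilon\in\{1,-1\}$, $1\le k\le n$ and $\sigma\in\mathcal D^\Delta_k$. Then $$\sum_{\pi\in\Delta^<_n,\ dp(\pi)=\sigma}\varepsilon^{\ell_B(\pi)}q^{\mathrm{fmaj}(\pi)}=\varepsilon^{\ell_B(\sigma)}q^{2(n-k)+\mathrm{fmaj}(\sigma)}{n-1\brack k-1}_{q^2}.$$
   Context: $B_n$ is the set of words $\pi=\pi_1\cdots\pi_n$ with $\pi_i\in\{\pm1,\dots,\pm n\}$ and $|\pi_1|\cdots|\pi_n|$ a permutation of $[n]$; $\Delta^<_n=\{\pi\in B_n:0<\pi_n<n\}$; $\mathcal D^\Delta_k$ is the set of $\sigma\in B_k$ with $\sigma_k>0$ and $\sigma_i\ne i$ for all $i$. $\mathrm{inv}$ in usual order, $\ell_B(\pi)=\mathrm{inv}(\pi)-\sum_{i:\pi_i<0}\pi_i$. Order $\prec$: $-1\prec-2\prec\cdots\prec-N\prec1\prec\cdots\prec N$; $\mathrm{maj}_\prec(w)=\sum_{i:w_i\succ w_{i+1}}i$; $\mathrm{fmaj}(w)=2\mathrm{maj}_\prec(w)+\mathrm{neg}(w)$ with $\mathrm{neg}(w)$ the number of negative letters. For a word of nonzero integers with distinct absolute values $a_1<\dots<a_m$, its reduction replaces each letter $\pm a_j$ by $\pm j$; $dp(\pi)$ is the reduction of the subword of letters $\pi_i$ with $\pi_i\ne i$. $[m]_x=1+x+\dots+x^{m-1}$, $[m]_x!=[1]_x\cdots[m]_x$, $[0]_x!=1$, ${n\brack k}_x=\frac{[n]_x!}{[k]_x![n-k]_x!}$.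 *)

theory Defs
  imports Complex_Main
begin

text \<open>Signed permutations (words) are lists of integers; positions are 1-indexed
  in the paper, so the paper's pi_i is the list element w ! (i - 1).\<close>

definition signed_perms :: "nat \<Rightarrow> int list set" where
  "signed_perms n = {w. length w = n \<and> set (map abs w) = {1..int n}}"

definition Delta_lt :: "nat \<Rightarrow> int list set" where
  "Delta_lt n = {w \<in> signed_perms n. 0 < w ! (n - 1) \<and> w ! (n - 1) < int n}"

definition D_Delta :: "nat \<Rightarrow> int list set" where
  "D_Delta k = {s \<in> signed_perms k. 0 < s ! (k - 1) \<and> (\<forall>i<k. s ! i \<noteq> int (i + 1))}"

definition inv_count :: "int list \<Rightarrow> nat" where
  "inv_count w = card {(i, j). i < j \<and> j < length w \<and> w ! i > w ! j}"

definition ellB :: "int list \<Rightarrow> int" where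
  "ellB w = int (inv_count w) - (\<Sum>i\<in>{i. i < length w \<and> w ! i < 0}. w ! i)"

definition prec :: "int \<Rightarrow> int \<Rightarrow> bool" where
  "prec a b \<longleftrightarrow> (a < 0 \<and> b > 0) \<or> (a < 0 \<and> b < 0 \<and> b < a) \<or> (a > 0 \<and> b > 0 \<and> a < b)"

text \<open>maj: sum of 1-indexed positions i with w_i succ w_(i+1).\<close>
definition maj_prec :: "int list \<Rightarrow> nat" where
  "maj_prec w = (\<Sum>i\<in>{i. 1 \<le> i \<and> i < length w \<and> prec (w ! i) (w ! (i - 1))}. i)"

definition neg :: "int list \<Rightarrow> nat" where
  "neg w = card {i. i < length w \<and> w ! i < 0}"

definition fmaj :: "int list \<Rightarrow> nat" where
  "fmaj w = 2 * maj_prec w + neg w"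

definition reduction :: "int list \<Rightarrow> int list" where
  "reduction w = map (\<lambda>x. sgn x * int (card {y \<in> set (map abs w). y \<le> abs x})) w"

definition dp :: "int list \<Rightarrow> int list" where
  "dp w = reduction (map fst (filter (\<lambda>(x, i). x \<noteq> int i) (zip w [1..<length w + 1])))"

definition qint :: "nat \<Rightarrow> real \<Rightarrow> real" where
  "qint m x = (\<Sum>i<m. x ^ i)"

definition qfact :: "nat \<Rightarrow> real \<Rightarrow> real" where
  "qfact m x = (\<Prod>i\<in>{1..m}. qint i x)"

definition qbinom :: "nat \<Rightarrow> nat \<Rightarrow> real \<Rightarrow> real" where
  "qbinom n k x = qfact n x / (qfact k x * qfact (n - k) x)"

end

theory Submission
  imports Defs
begin


definition GB :: "real \<Rightarrow> nat \<Rightarrow> nat \<Rightarrow> real" where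
  "GB x r j = qfact (r + j) x / (qfact r x * qfact j x)"

lemma qint_ge1: "x \<ge> 0 \<Longrightarrow> 1 \<le> i \<Longrightarrow> qint i x \<ge> 1"
proof -
  assume x: "x \<ge> 0" and i: "1 \<le> i"
  have "qint i x = (\<Sum>l<i. x ^ l)" by (simp add: qint_def)
  also have "\<dots> = x^0 + (\<Sum>l\<in>{1..<i}. x ^ l)"
    using i by (metis One_nat_def Suc_le_eq lessThan_atLeast0 sum.atLeast_Suc_lessThan)
  also have "\<dots> \<ge> 1" using x by (simp add: sum_nonneg)
  finally show ?thesis .
qed

lemma qfact_pos: "x \<ge> 0 \<Longrightarrow> qfact m x > 0"
  unfolding qfact_def by (rule prod_pos) (use qint_ge1 in force)

lemma qfact_Suc: "qfact (Suc m) x = qfact m x * qint (Suc m) x"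
  unfolding qfact_def by (simp add: atLeastAtMostSuc_conv)

lemma qint_add: "qint (a + b) x = qint a x + x ^ a * qint b x"
  by (induction b) (simp_all add: qint_def power_add algebra_simps)

lemma qfact_0 [simp]: "qfact 0 x = 1" by (simp add: qfact_def)

lemma GB_0: "x \<ge> 0 \<Longrightarrow> GB x 0 j = 1" "x\<ge>0 \<Longrightarrow> GB x r 0 = 1"
  using qfact_pos[of x j] qfact_pos[of x r] unfolding GB_def by (auto simp: qfact_0)

lemma GB_pascal1:
  assumes x: "x \<ge> 0"
  shows "GB x (Suc a) (Suc b) = GB x (Suc a) b + x ^ Suc b * GB x a (Suc b)"
proof -
  have N: "qfact (Suc a + Suc b) x = qfact (a + Suc b) x * (qint (Suc b) x + x ^ Suc b * qint (Suc a) x)"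
    using qfact_Suc[of "a + Suc b" x] qint_add[of "Suc b" "Suc a" x] by (simp add: add.commute)
  have e1: "a + Suc b = Suc a + b" by simp
  have A: "qfact (Suc a) x = qfact a x * qint (Suc a) x" by (rule qfact_Suc)
  have B: "qfact (Suc b) x = qfact b x * qint (Suc b) x" by (rule qfact_Suc)
  have pa: "qfact a x > 0" "qfact b x > 0" "qint (Suc a) x > 0" "qint (Suc b) x > 0"
    using qfact_pos[OF x] qint_ge1[OF x] by (auto intro: less_le_trans[OF zero_less_one])
  show ?thesis unfolding GB_def N A B e1[symmetric] using pa
    by (simp add: field_simps)
qed

lemma GB_pascal2:
  assumes x: "x \<ge> 0"
  shows "GB x (Suc a) (Suc b) = x ^ Suc a * GB x (Suc a) b + GB x a (Suc b)"
proof -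
  have N: "qfact (Suc a + Suc b) x = qfact (a + Suc b) x * (qint (Suc a) x + x ^ Suc a * qint (Suc b) x)"
    using qfact_Suc[of "a + Suc b" x] qint_add[of "Suc a" "Suc b" x] by simp
  have e1: "a + Suc b = Suc a + b" by simp
  have A: "qfact (Suc a) x = qfact a x * qint (Suc a) x" by (rule qfact_Suc)
  have B: "qfact (Suc b) x = qfact b x * qint (Suc b) x" by (rule qfact_Suc)
  have pa: "qfact a x > 0" "qfact b x > 0" "qint (Suc a) x > 0" "qint (Suc b) x > 0"
    using qfact_pos[OF x] qint_ge1[OF x] by (auto intro: less_le_trans[OF zero_less_one])
  show ?thesis unfolding GB_def N A B e1[symmetric] using pa
    by (simp add: field_simps)
qed

lemma GB_hockey:
  assumes x: "x \<ge> 0"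
  shows "(\<Sum>s\<le>r. x ^ s * GB x s b) = GB x r (Suc b)"
proof (induction r)
  case 0 then show ?case using GB_0[OF x] by simp
next
  case (Suc r)
  then show ?case using GB_pascal2[OF x, of r b] by simp
qed

lemma GB_step:
  assumes x: "x \<ge> 0"
  shows "(\<Sum>s<r. x ^ (Suc b + s) * GB x s b) + GB x r b = GB x r (Suc b)"
proof (cases r)
  case 0 then show ?thesis using GB_0[OF x] by simp
next
  case (Suc a)
  have "(\<Sum>s<r. x ^ (Suc b + s) * GB x s b) = x ^ Suc b * (\<Sum>s\<le>a. x ^ s * GB x s b)"
    unfolding Suc lessThan_Suc_atMost by (simp add: sum_distrib_left power_add mult.assoc)
  also have "\<dots> = x ^ Suc b * GB x a (Suc b)" using GB_hockey[OF x] by simp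
  finally show ?thesis using GB_pascal1[OF x, of a b] Suc by simp
qed


definition comps :: "nat \<Rightarrow> nat \<Rightarrow> nat list set" where
  "comps j r = {g. length g = j \<and> sum_list g = r}"

lemma comps_finite: "finite (comps j r)"
proof -
  have "comps j r \<subseteq> {g. set g \<subseteq> {..r} \<and> length g = j}"
    unfolding comps_def using member_le_sum_list by fastforce
  moreover have "finite {g. set g \<subseteq> {..r} \<and> length g = j}"
    by (rule finite_lists_length_eq) simp
  ultimately show ?thesis by (rule finite_subset)
qed

lemma comps_Suc_eq:
  "comps (Suc j) r = (\<lambda>(h, g). g @ [h]) ` (SIGMA h:{..r}. comps j (r - h))"
proof (intro set_eqI iffI)
  fix g assume "g \<in> comps (Suc j) r"
  then have l: "length g = Suc j" and s: "sum_list g = r" by (auto simp: comps_def)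
  then obtain g' h where g: "g = g' @ [h]" by (metis length_Suc_conv_rev)
  with l s show "g \<in> (\<lambda>(h, g). g @ [h]) ` (SIGMA h:{..r}. comps j (r - h))"
    by (auto simp: comps_def image_iff intro!: bexI[of _ "(h, g')"])
qed (auto simp: comps_def)

lemma sum_comps_Suc:
  "(\<Sum>g\<in>comps (Suc j) r. f g) = (\<Sum>h\<le>r. \<Sum>g\<in>comps j (r - h). f (g @ [h]))"
proof -
  have inj: "inj_on (\<lambda>(h, g). g @ [h]) (SIGMA h:{..r}. comps j (r - h))"
    by (auto simp: inj_on_def)
  show ?thesis
    unfolding comps_Suc_eq sum.reindex[OF inj]
    by (subst sum.Sigma) (auto simp: comps_finite split_def)
qed

lemma comps_1: "comps (Suc 0) r = {[r]}"
  by (auto simp: comps_def length_Suc_conv)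

lemma sum_rev_split:
  "(\<Sum>h\<le>(r::nat). F h) = F 0 + (\<Sum>s<r. F (r - s))"
proof -
  have "(\<Sum>h\<le>r. F h) = (\<Sum>s\<le>r. F (r - s))"
    using sum.atLeastAtMost_rev[of F 0 r] by (simp add: atLeast0AtMost)
  also have "\<dots> = F 0 + (\<Sum>s<r. F (r - s))"
    by (simp add: lessThan_Suc_atMost[symmetric] add.commute)
  finally show ?thesis .
qed

definition contrib :: "(nat \<Rightarrow> bool) \<Rightarrow> (nat \<Rightarrow> bool) \<Rightarrow> nat \<Rightarrow> nat \<Rightarrow> nat \<Rightarrow> nat" where
  "contrib lo dd t s h = (if h = 0 then (if 0 < t \<and> dd t then t + s else 0)
      else (if 0 < t \<and> \<not> lo (t - 1) then t + s else 0) + (if lo t then t + s + h else 0))"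

definition Mf :: "(nat \<Rightarrow> bool) \<Rightarrow> (nat \<Rightarrow> bool) \<Rightarrow> nat list \<Rightarrow> nat" where
  "Mf lo dd g = (\<Sum>t<length g. contrib lo dd t (sum_list (take t g)) (g ! t))"

lemma Mf_snoc: "Mf lo dd (g @ [h]) = Mf lo dd g + contrib lo dd (length g) (sum_list g) h"
  unfolding Mf_def by (simp add: nth_append)

definition pm :: "(nat \<Rightarrow> bool) \<Rightarrow> nat \<Rightarrow> nat" where
  "pm dd j = (\<Sum>i\<in>{1..<j}. if dd i then i else 0)"

lemma pm_Suc: "j \<ge> 1 \<Longrightarrow> pm dd (Suc j) = pm dd j + (if dd j then j else 0)"
  unfolding pm_def by simp

lemma L_lemma:
  assumes x: "x \<ge> 0"
    and h1: "\<And>t. 1 \<le> t \<Longrightarrow> t < Suc j \<Longrightarrow> \<not> lo (t - 1) \<Longrightarrow> lo t \<Longrightarrow> dd t"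
    and h2: "\<And>t. 1 \<le> t \<Longrightarrow> t < Suc j \<Longrightarrow> lo (t - 1) \<Longrightarrow> \<not> lo t \<Longrightarrow> \<not> dd t"
  shows "(\<Sum>g\<in>comps (Suc j) r. x ^ Mf lo dd g)
       = x ^ (pm dd (Suc j) + (if lo j then r else 0)) * GB x r j"
  using h1 h2
proof (induction j arbitrary: r)
  case 0
  show ?case using GB_0[OF x]
    by (simp add: comps_1 Mf_def contrib_def pm_def)
next
  case (Suc j)
  let ?t = "Suc j"
  have IH: "\<And>s. (\<Sum>g\<in>comps (Suc j) s. x ^ Mf lo dd g)
       = x ^ (pm dd (Suc j) + (if lo j then s else 0)) * GB x s j"
    using Suc.IH Suc.prems by simp
  define P where "P = pm dd ?t"
  define F where "F h = x ^ contrib lo dd ?t (r - h) h * (x ^ (P + (if lo j then r - h else 0)) * GB x (r - h) j)" for h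
  have "(\<Sum>g\<in>comps (Suc ?t) r. x ^ Mf lo dd g)
      = (\<Sum>h\<le>r. \<Sum>g\<in>comps ?t (r - h). x ^ Mf lo dd (g @ [h]))"
    by (rule sum_comps_Suc)
  also have "\<dots> = (\<Sum>h\<le>r. F h)"
  proof (rule sum.cong[OF refl])
    fix h assume "h \<in> {..r}"
    have "(\<Sum>g\<in>comps ?t (r - h). x ^ Mf lo dd (g @ [h]))
        = (\<Sum>g\<in>comps ?t (r - h). x ^ contrib lo dd ?t (r - h) h * x ^ Mf lo dd g)"
      by (rule sum.cong[OF refl]) (auto simp: Mf_snoc comps_def power_add)
    also have "\<dots> = x ^ contrib lo dd ?t (r - h) h * (\<Sum>g\<in>comps ?t (r - h). x ^ Mf lo dd g)"
      by (simp add: sum_distrib_left)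
    finally show "(\<Sum>g\<in>comps ?t (r - h). x ^ Mf lo dd (g @ [h])) = F h"
      unfolding F_def IH P_def by simp
  qed
  also have "\<dots> = F 0 + (\<Sum>s<r. F (r - s))" by (rule sum_rev_split)
  finally have S: "(\<Sum>g\<in>comps (Suc ?t) r. x ^ Mf lo dd g) = F 0 + (\<Sum>s<r. F (r - s))" .
  have F0: "F 0 = x ^ ((if dd ?t then ?t + r else 0) + P + (if lo j then r else 0)) * GB x r j"
    unfolding F_def contrib_def by (simp add: power_add)
  have Fs: "F (r - s) = x ^ ((if \<not> lo j then ?t + s else 0) + (if lo ?t then ?t + r else 0)
                + P + (if lo j then s else 0)) * GB x s j" if "s < r" for s
    using that unfolding F_def contrib_def by (simp add: power_add)
  have PS: "pm dd (Suc ?t) = P + (if dd ?t then ?t else 0)" unfolding P_def by (simp add: pm_Suc)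
  have step: "(\<Sum>s<r. x ^ (Suc j + s) * GB x s j) + GB x r j = GB x r (Suc j)"
    by (rule GB_step[OF x])
  have hock: "(\<Sum>s\<le>r. x ^ s * GB x s j) = GB x r (Suc j)" by (rule GB_hockey[OF x])
  have hock': "(\<Sum>s<r. x ^ s * GB x s j) + x ^ r * GB x r j = GB x r (Suc j)"
    using hock by (simp add: lessThan_Suc_atMost[symmetric])
  show ?case
  proof (cases "lo j")
    case lj: True
    show ?thesis
    proof (cases "lo ?t")
      case lt: True
      show ?thesis
      proof (cases "dd ?t")
        case d: True
        have "(\<Sum>s<r. F (r - s)) = x ^ (P + ?t + r) * (\<Sum>s<r. x ^ s * GB x s j)"
          by (simp add: Fs lj lt sum_distrib_left power_add mult_ac)
        then show ?thesis unfolding S F0 PS using lj lt d hock'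
          by (simp add: power_add algebra_simps flip: distrib_left)
      next
        case d: False
        have "(\<Sum>s<r. F (r - s)) = x ^ (P + r) * (\<Sum>s<r. x ^ (Suc j + s) * GB x s j)"
          by (simp add: Fs lj lt sum_distrib_left power_add mult_ac)
        then show ?thesis unfolding S F0 PS using lj lt d step
          by (simp add: power_add algebra_simps flip: distrib_left)
      qed
    next
      case lt: False
      have d: "\<not> dd ?t" using Suc.prems(2)[of ?t] lj lt by simp
      have "(\<Sum>s<r. F (r - s)) = x ^ P * (\<Sum>s<r. x ^ s * GB x s j)"
        by (simp add: Fs lj lt sum_distrib_left power_add mult_ac)
      then show ?thesis unfolding S F0 PS using lj lt d hock'
        by (simp add: power_add algebra_simps flip: distrib_left)
    qed
  next
    case lj: False
    show ?thesis
    proof (cases "lo ?t")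
      case lt: True
      have d: "dd ?t" using Suc.prems(1)[of ?t] lj lt by simp
      have "(\<Sum>s<r. F (r - s)) = x ^ (P + ?t + r) * (\<Sum>s<r. x ^ (Suc j + s) * GB x s j)"
        by (simp add: Fs lj lt sum_distrib_left power_add mult_ac)
      then show ?thesis unfolding S F0 PS using lj lt d step
        by (simp add: power_add algebra_simps flip: distrib_left)
    next
      case lt: False
      show ?thesis
      proof (cases "dd ?t")
        case d: True
        have "(\<Sum>s<r. F (r - s)) = x ^ (P + ?t) * (\<Sum>s<r. x ^ s * GB x s j)"
          by (simp add: Fs lj lt sum_distrib_left power_add mult_ac)
        then show ?thesis unfolding S F0 PS using lj lt d hock'
          by (simp add: power_add algebra_simps flip: distrib_left)
      next
        case d: False
        have "(\<Sum>s<r. F (r - s)) = x ^ P * (\<Sum>s<r. x ^ (Suc j + s) * GB x s j)"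
          by (simp add: Fs lj lt sum_distrib_left power_add mult_ac)
        then show ?thesis unfolding S F0 PS using lj lt d step
          by (simp add: power_add algebra_simps flip: distrib_left)
      qed
    qed
  qed
qed


locale sig =
  fixes \<sigma> :: "int list" and k :: nat
  assumes sD: "\<sigma> \<in> D_Delta k" and k1: "1 \<le> k"
begin

lemma len_s: "length \<sigma> = k" using sD by (simp add: D_Delta_def signed_perms_def)
lemma set_abs_s: "abs ` set \<sigma> = {1..int k}" using sD by (simp add: D_Delta_def signed_perms_def)
lemma last_pos: "\<sigma> ! (k - 1) > 0" using sD by (simp add: D_Delta_def)
lemma derange: "t < k \<Longrightarrow> \<sigma> ! t \<noteq> int (t + 1)" using sD by (simp add: D_Delta_def)

lemma abs_range: "t < k \<Longrightarrow> 1 \<le> \<bar>\<sigma> ! t\<bar> \<and> \<bar>\<sigma> ! t\<bar> \<le> int k"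
  using set_abs_s len_s by (metis atLeastAtMost_iff image_eqI nth_mem)

lemma s_nz: "t < k \<Longrightarrow> \<sigma> ! t \<noteq> 0" using abs_range by force

lemma distinct_abs: "distinct (map abs \<sigma>)"
proof -
  have "card (set (map abs \<sigma>)) = k" using set_abs_s by simp
  then show ?thesis using len_s by (simp add: card_distinct)
qed

lemma abs_inj: "t < k \<Longrightarrow> t' < k \<Longrightarrow> \<bar>\<sigma> ! t\<bar> = \<bar>\<sigma> ! t'\<bar> \<Longrightarrow> t = t'"
  using distinct_abs len_s unfolding distinct_conv_nth by (metis length_map nth_map)

lemma abs_surj: "1 \<le> a \<Longrightarrow> a \<le> int k \<Longrightarrow> \<exists>t<k. \<bar>\<sigma> ! t\<bar> = a"
proof -
  assume "1 \<le> a" "a \<le> int k"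
  then have "a \<in> abs ` set \<sigma>" using set_abs_s by simp
  then show ?thesis using len_s by (auto simp: in_set_conv_nth)
qed

definition P :: "nat list \<Rightarrow> nat \<Rightarrow> nat" where
  "P g t = t + sum_list (take (Suc t) g)"

definition phi :: "nat list \<Rightarrow> int \<Rightarrow> int" where
  "phi g x = sgn x * int (P g (nat \<bar>x\<bar> - 1) + 1)"

primrec W :: "nat list \<Rightarrow> nat \<Rightarrow> int list" where
  "W g 0 = []"
| "W g (Suc t) = W g t @ map (\<lambda>i. int (i + 1)) [length (W g t)..<P g t] @ [phi g (\<sigma> ! t)]"

definition Pi :: "nat list \<Rightarrow> int list" where "Pi g = W g k"

lemma P_Suc: "Suc t < length g \<Longrightarrow> P g (Suc t) = P g t + 1 + g ! Suc t"
  unfolding P_def by (simp add: take_Suc_conv_app_nth)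

lemma P_mono_Suc: "Suc t < length g \<Longrightarrow> P g t < P g (Suc t)"
  using P_Suc by simp

lemma P_strict: "t < t' \<Longrightarrow> t' < length g \<Longrightarrow> P g t < P g t'"
proof (induction t' arbitrary: t)
  case 0 then show ?case by simp
next
  case (Suc t')
  then show ?case using P_mono_Suc[of t' g]
    by (metis less_Suc_eq less_trans Suc_lessD)
qed

lemma P_le_iff: "t < length g \<Longrightarrow> t' < length g \<Longrightarrow> P g t \<le> P g t' \<longleftrightarrow> t \<le> t'"
  by (metis P_strict leD le_less_linear order.order_iff_strict)

lemma P_less_iff: "t < length g \<Longrightarrow> t' < length g \<Longrightarrow> P g t < P g t' \<longleftrightarrow> t < t'"
  by (metis P_strict leD le_less_linear order.order_iff_strict)

lemma P_inj: "t < length g \<Longrightarrow> t' < length g \<Longrightarrow> P g t = P g t' \<Longrightarrow> t = t'"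
  by (metis P_le_iff le_antisym order_refl)

lemma P_last: "length g = k \<Longrightarrow> P g (k - 1) = k - 1 + sum_list g"
  using k1 unfolding P_def by simp

lemma len_W: "length g = k \<Longrightarrow> t \<le> k \<Longrightarrow> length (W g t) = (if t = 0 then 0 else P g (t - 1) + 1)"
proof (induction t)
  case 0 then show ?case by simp
next
  case (Suc t)
  have le: "length (W g t) \<le> P g t"
  proof (cases t)
    case 0 then show ?thesis by simp
  next
    case (Suc t')
    then show ?thesis using Suc.IH Suc.prems P_mono_Suc[of t' g] by simp
  qed
  then show ?case by simp
qed

lemma W_letter: "length g = k \<Longrightarrow> t' < t \<Longrightarrow> t \<le> k \<Longrightarrow> W g t ! (P g t') = phi g (\<sigma> ! t')"
proof (induction t)
  case 0 then show ?case by simp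
next
  case (Suc t)
  have lw: "length (W g t) = (if t = 0 then 0 else P g (t - 1) + 1)" using len_W Suc.prems by simp
  show ?case
  proof (cases "t' = t")
    case True
    have le: "length (W g t) \<le> P g t"
      using lw P_mono_Suc[of "t - 1" g] Suc.prems by (cases t) auto
    then show ?thesis using True by (simp add: nth_append)
  next
    case False
    then have "t' < t" using Suc.prems by simp
    have "P g t' \<le> P g (t - 1)" using P_le_iff[of t' g "t - 1"] Suc.prems \<open>t' < t\<close> by auto
    then have "P g t' < length (W g t)"
      using lw \<open>t' < t\<close> by auto
    then show ?thesis using Suc.IH Suc.prems \<open>t' < t\<close> by (simp add: nth_append)
  qed
qed

lemma W_fixed: "length g = k \<Longrightarrow> t \<le> k \<Longrightarrow> i < length (W g t) \<Longrightarrow> (\<forall>t'<t. P g t' \<noteq> i)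
   \<Longrightarrow> W g t ! i = int (i + 1)"
proof (induction t)
  case 0 then show ?case by simp
next
  case (Suc t)
  have lw: "length (W g t) = (if t = 0 then 0 else P g (t - 1) + 1)" using len_W Suc.prems by simp
  have le: "length (W g t) \<le> P g t"
    using lw P_mono_Suc[of "t - 1" g] Suc.prems by (cases t) auto
  have lws: "length (W g (Suc t)) = P g t + 1" using len_W[of g "Suc t"] Suc.prems by simp
  show ?case
  proof (cases "i < length (W g t)")
    case True
    then show ?thesis using Suc by (simp add: nth_append)
  next
    case False
    then have "i < P g t" using Suc.prems(3,4) lws by (metis less_Suc_eq Suc_eq_plus1 lessI)
    have "i - length (W g t) < P g t - length (W g t)" using \<open>i < P g t\<close> False by arith
    then show ?thesis using False le by (simp add: nth_append)
  qed
qed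


lemma len_Pi: "length g = k \<Longrightarrow> length (Pi g) = k + sum_list g"
  unfolding Pi_def using len_W[of g k] k1 P_last by simp

lemma Pi_letter: "length g = k \<Longrightarrow> t < k \<Longrightarrow> Pi g ! (P g t) = phi g (\<sigma> ! t)"
  unfolding Pi_def by (rule W_letter) auto

lemma Pi_fixed: "length g = k \<Longrightarrow> i < length (Pi g) \<Longrightarrow> (\<forall>t<k. P g t \<noteq> i) \<Longrightarrow> Pi g ! i = int (i + 1)"
  unfolding Pi_def by (rule W_fixed) auto

lemma P_lt_len: "length g = k \<Longrightarrow> t < k \<Longrightarrow> P g t < length (Pi g)"
  using P_le_iff[of t g "k - 1"] P_last len_Pi by auto

lemma abs_phi: "\<bar>phi g x\<bar> = int (P g (nat \<bar>x\<bar> - 1) + 1) \<or> x = 0"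
  unfolding phi_def by (auto simp: abs_mult sgn_if)

lemma phi_pos: "phi g x > 0 \<longleftrightarrow> x > 0" and phi_neg: "phi g x < 0 \<longleftrightarrow> x < 0"
  unfolding phi_def by (auto simp: sgn_if)

lemma abs_phi': "x \<noteq> 0 \<Longrightarrow> \<bar>phi g x\<bar> = int (P g (nat \<bar>x\<bar> - 1) + 1)"
  using abs_phi by blast

lemma sign_abs_transfer:
  fixes a b c d :: int
  assumes "a \<noteq> 0" "b \<noteq> 0"
    and "c > 0 \<longleftrightarrow> a > 0" "c < 0 \<longleftrightarrow> a < 0" "d > 0 \<longleftrightarrow> b > 0" "d < 0 \<longleftrightarrow> b < 0"
    and "\<bar>c\<bar> < \<bar>d\<bar> \<longleftrightarrow> \<bar>a\<bar> < \<bar>b\<bar>" "\<bar>d\<bar> < \<bar>c\<bar> \<longleftrightarrow> \<bar>b\<bar> < \<bar>a\<bar>"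
  shows "(c < d \<longleftrightarrow> a < b) \<and> (prec c d \<longleftrightarrow> prec a b)"
  using assms unfolding prec_def by (auto simp: abs_if split: if_splits)

lemma phi_transfer:
  assumes g: "length g = k" and "t < k" "t' < k"
  shows "(phi g (\<sigma>!t) < phi g (\<sigma>!t') \<longleftrightarrow> \<sigma>!t < \<sigma>!t')
       \<and> (prec (phi g (\<sigma>!t)) (phi g (\<sigma>!t')) \<longleftrightarrow> prec (\<sigma>!t) (\<sigma>!t'))"
proof -
  have nz: "\<sigma>!t \<noteq> 0" "\<sigma>!t' \<noteq> 0" using s_nz assms by auto
  have r: "nat \<bar>\<sigma>!t\<bar> - 1 < length g" "nat \<bar>\<sigma>!t'\<bar> - 1 < length g"
    using abs_range[of t] abs_range[of t'] assms by auto
  have a1: "1 \<le> \<bar>\<sigma>!t\<bar>" "1 \<le> \<bar>\<sigma>!t'\<bar>" using abs_range assms by auto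
  have na: "nat \<bar>\<sigma>!t\<bar> - 1 < nat \<bar>\<sigma>!t'\<bar> - 1 \<longleftrightarrow> \<bar>\<sigma>!t\<bar> < \<bar>\<sigma>!t'\<bar>"
           "nat \<bar>\<sigma>!t'\<bar> - 1 < nat \<bar>\<sigma>!t\<bar> - 1 \<longleftrightarrow> \<bar>\<sigma>!t'\<bar> < \<bar>\<sigma>!t\<bar>"
    using a1 by linarith+
  have "\<bar>phi g (\<sigma>!t)\<bar> < \<bar>phi g (\<sigma>!t')\<bar> \<longleftrightarrow> \<bar>\<sigma>!t\<bar> < \<bar>\<sigma>!t'\<bar>"
    using na abs_phi'[OF nz(1)] abs_phi'[OF nz(2)] P_less_iff[OF r] nz by auto
  moreover have "\<bar>phi g (\<sigma>!t')\<bar> < \<bar>phi g (\<sigma>!t)\<bar> \<longleftrightarrow> \<bar>\<sigma>!t'\<bar> < \<bar>\<sigma>!t\<bar>"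
    using na abs_phi'[OF nz(1)] abs_phi'[OF nz(2)] P_less_iff[OF r(2) r(1)] nz by auto
  ultimately show ?thesis
    by (intro sign_abs_transfer nz) (auto simp: phi_pos phi_neg)
qed

lemma letter_nonfixed: "length g = k \<Longrightarrow> t < k \<Longrightarrow> phi g (\<sigma> ! t) \<noteq> int (P g t + 1)"
proof
  assume g: "length g = k" and t: "t < k" and e: "phi g (\<sigma> ! t) = int (P g t + 1)"
  then have "phi g (\<sigma> ! t) > 0" by simp
  then have pos: "\<sigma> ! t > 0" using phi_pos by blast
  then have "phi g (\<sigma> ! t) = int (P g (nat (\<sigma>!t) - 1) + 1)" unfolding phi_def by simp
  with e have "P g (nat (\<sigma>!t) - 1) = P g t" by simp
  moreover have "nat (\<sigma>!t) - 1 < length g" using abs_range[OF t] g pos by auto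
  ultimately have "nat (\<sigma>!t) - 1 = t" using P_inj g t by blast
  then show False using derange[OF t] pos by auto
qed

lemma Pi_nonfixed_iff:
  assumes g: "length g = k" and i: "i < length (Pi g)"
  shows "Pi g ! i \<noteq> int (i + 1) \<longleftrightarrow> i \<in> P g ` {..<k}"
proof
  assume "Pi g ! i \<noteq> int (i + 1)"
  then show "i \<in> P g ` {..<k}" using Pi_fixed[OF g i] by force
next
  assume "i \<in> P g ` {..<k}"
  then obtain t where t: "t < k" "i = P g t" by auto
  then show "Pi g ! i \<noteq> int (i + 1)" using Pi_letter[OF g t(1)] letter_nonfixed[OF g t(1)] by simp
qed

lemma Pi_signed: assumes g: "length g = k" shows "Pi g \<in> signed_perms (k + sum_list g)"
proof -
  let ?n = "k + sum_list g"
  have "abs ` set (Pi g) = {1..int ?n}"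
  proof (intro set_eqI iffI)
    fix v assume "v \<in> abs ` set (Pi g)"
    then obtain i where i: "i < length (Pi g)" "v = \<bar>Pi g ! i\<bar>" by (auto simp: in_set_conv_nth)
    show "v \<in> {1..int ?n}"
    proof (cases "i \<in> P g ` {..<k}")
      case True
      then obtain t where t: "t < k" "i = P g t" by auto
      have nz: "\<sigma>!t \<noteq> 0" using s_nz t by auto
      have "nat \<bar>\<sigma>!t\<bar> - 1 < k" using abs_range[OF t(1)] by auto
      then have "P g (nat \<bar>\<sigma>!t\<bar> - 1) < ?n" using P_lt_len[OF g] len_Pi[OF g] by metis
      then show ?thesis using i t Pi_letter[OF g t(1)] abs_phi'[OF nz] by auto
    next
      case False
      then have "\<forall>t<k. P g t \<noteq> i" by auto
      then show ?thesis using i Pi_fixed[OF g i(1)] len_Pi[OF g] by auto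
    qed
  next
    fix v assume v: "v \<in> {1..int ?n}"
    define i where "i = nat v - 1"
    have i: "i < length (Pi g)" "v = int (i + 1)" using v len_Pi[OF g] by (auto simp: i_def)
    show "v \<in> abs ` set (Pi g)"
    proof (cases "i \<in> P g ` {..<k}")
      case True
      then obtain a where a: "a < k" "i = P g a" by auto
      obtain t where t: "t < k" "\<bar>\<sigma>!t\<bar> = int (a + 1)" using abs_surj[of "int (a+1)"] a by auto
      have nz: "\<sigma>!t \<noteq> 0" using s_nz t by auto
      have e: "nat \<bar>\<sigma>!t\<bar> - 1 = a" using t(2) by simp
      have "\<bar>Pi g ! (P g t)\<bar> = v" using Pi_letter[OF g t(1)] abs_phi'[OF nz] e a i by simp
      then show ?thesis using P_lt_len[OF g t(1)] by (metis image_eqI nth_mem)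
    next
      case False
      then have "\<forall>t<k. P g t \<noteq> i" by auto
      then have "Pi g ! i = v" using Pi_fixed[OF g i(1)] i by auto
      then show ?thesis using i by (metis abs_of_nonneg image_eqI nth_mem of_nat_0_le_iff)
    qed
  qed
  then show ?thesis unfolding signed_perms_def using len_Pi[OF g] by simp
qed

end


lemma dp_alt: "map fst (filter (\<lambda>(x, i). x \<noteq> int i) (zip w [1..<length w + 1]))
   = map ((!) w) (filter (\<lambda>i. w ! i \<noteq> int (i + 1)) [0..<length w])"
proof -
  have "zip w [1..<length w + 1] = map (\<lambda>i. (w ! i, Suc i)) [0..<length w]"
    by (rule nth_equalityI) (auto simp del: upt_Suc)
  then show ?thesis by (simp add: filter_map o_def)
qed

context sig begin

lemma sorted_P: "length g = k \<Longrightarrow> sorted (map (P g) [0..<k])"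
  by (auto simp: sorted_iff_nth_mono P_le_iff)

lemma distinct_P: "length g = k \<Longrightarrow> distinct (map (P g) [0..<k])"
  by (auto simp: distinct_map inj_on_def dest: P_inj)

lemma Pi_filter: assumes g: "length g = k"
  shows "filter (\<lambda>i. Pi g ! i \<noteq> int (i + 1)) [0..<length (Pi g)] = map (P g) [0..<k]"
proof (rule sorted_distinct_set_unique)
  show "set (filter (\<lambda>i. Pi g ! i \<noteq> int (i + 1)) [0..<length (Pi g)]) = set (map (P g) [0..<k])"
  proof (intro set_eqI iffI)
    fix i assume "i \<in> set (filter (\<lambda>i. Pi g ! i \<noteq> int (i + 1)) [0..<length (Pi g)])"
    then show "i \<in> set (map (P g) [0..<k])" using Pi_nonfixed_iff[OF g] by auto
  next
    fix i assume "i \<in> set (map (P g) [0..<k])"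
    then obtain t where t: "t < k" "i = P g t" by auto
    then have "i < length (Pi g)" using P_lt_len[OF g] by simp
    then show "i \<in> set (filter (\<lambda>i. Pi g ! i \<noteq> int (i + 1)) [0..<length (Pi g)])"
      using Pi_nonfixed_iff[OF g] t by auto
  qed
qed (use sorted_P[OF g] distinct_P[OF g] sorted_wrt_filter[OF sorted_upt] in auto)

lemma subword_Pi: assumes g: "length g = k"
  shows "map fst (filter (\<lambda>(x, i). x \<noteq> int i) (zip (Pi g) [1..<length (Pi g) + 1]))
         = map (\<lambda>t. phi g (\<sigma> ! t)) [0..<k]"
  unfolding dp_alt Pi_filter[OF g] using Pi_letter[OF g] by simp

lemma reduction_phi: assumes g: "length g = k"
  shows "reduction (map (\<lambda>t. phi g (\<sigma> ! t)) [0..<k]) = \<sigma>"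
proof (rule nth_equalityI)
  let ?u = "map (\<lambda>t. phi g (\<sigma> ! t)) [0..<k]"
  show "length (reduction ?u) = length \<sigma>" using len_s by (simp add: reduction_def)
  have setu: "set (map abs ?u) = (\<lambda>a. int (P g a + 1)) ` {..<k}"
  proof (intro set_eqI iffI)
    fix y assume "y \<in> set (map abs ?u)"
    then obtain s where s: "s < k" "y = \<bar>phi g (\<sigma> ! s)\<bar>" by auto
    then have "y = int (P g (nat \<bar>\<sigma>!s\<bar> - 1) + 1)" using abs_phi'[OF s_nz[OF s(1)]] by simp
    moreover have "nat \<bar>\<sigma>!s\<bar> - 1 < k" using abs_range[OF s(1)] by auto
    ultimately show "y \<in> (\<lambda>a. int (P g a + 1)) ` {..<k}" by auto
  next
    fix y assume "y \<in> (\<lambda>a. int (P g a + 1)) ` {..<k}"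
    then obtain a where a: "a < k" "y = int (P g a + 1)" by auto
    obtain s where s: "s < k" "\<bar>\<sigma>!s\<bar> = int (a + 1)" using abs_surj[of "int (a+1)"] a by auto
    have "nat \<bar>\<sigma>!s\<bar> - 1 = a" using s by simp
    then have "y = \<bar>phi g (\<sigma> ! s)\<bar>" using abs_phi'[OF s_nz[OF s(1)]] a by simp
    then show "y \<in> set (map abs ?u)" using s by auto
  qed
  fix t assume t: "t < length (reduction ?u)"
  then have t: "t < k" by (simp add: reduction_def)
  define c where "c = nat \<bar>\<sigma>!t\<bar> - 1"
  have c: "c < k" "int (c + 1) = \<bar>\<sigma>!t\<bar>" using abs_range[OF t] by (auto simp: c_def)
  have av: "\<bar>phi g (\<sigma>!t)\<bar> = int (P g c + 1)" using abs_phi'[OF s_nz[OF t]] by (simp add: c_def)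
  have "{y \<in> set (map abs ?u). y \<le> \<bar>phi g (\<sigma>!t)\<bar>} = (\<lambda>a. int (P g a + 1)) ` {..c}"
    unfolding setu av using c g P_le_iff[of _ g c] by (auto simp: image_iff)
  moreover have "card ((\<lambda>a. int (P g a + 1)) ` {..c}) = c + 1"
  proof -
    have inj: "inj_on (\<lambda>a. int (P g a + 1)) {..c}"
    proof (rule inj_onI)
      fix x y assume "x \<in> {..c}" "y \<in> {..c}" "int (P g x + 1) = int (P g y + 1)"
      then show "x = y" using P_inj[of x g y] c g by auto
    qed
    have "card ((\<lambda>a. int (P g a + 1)) ` {..c}) = card {..c}" by (rule card_image[OF inj])
    then show ?thesis by simp
  qed
  ultimately have cd: "card {y \<in> set (map abs ?u). y \<le> \<bar>phi g (\<sigma>!t)\<bar>} = c + 1" by simp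
  have "reduction ?u ! t = sgn (phi g (\<sigma>!t)) * int (c + 1)"
    using t cd by (simp add: reduction_def)
  also have "\<dots> = \<sigma> ! t"
  proof -
    have "sgn (phi g (\<sigma>!t)) = sgn (\<sigma>!t)" unfolding phi_def by (simp add: sgn_mult)
    then show ?thesis using c(2) by (simp add: sgn_mult_abs)
  qed
  finally show "reduction ?u ! t = \<sigma> ! t" .
qed

lemma dp_Pi: "length g = k \<Longrightarrow> dp (Pi g) = \<sigma>"
  unfolding dp_def using subword_Pi reduction_phi by simp

lemma Pi_Delta: assumes g: "length g = k" shows "Pi g \<in> Delta_lt (k + sum_list g)"
proof -
  let ?n = "k + sum_list g"
  have last: "?n - 1 = P g (k - 1)" using P_last[OF g] k1 by simp
  have v: "Pi g ! (?n - 1) = phi g (\<sigma> ! (k - 1))" using Pi_letter[OF g, of "k-1"] k1 last by simp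
  have pos: "\<sigma> ! (k - 1) > 0" by (rule last_pos)
  have ne: "\<sigma> ! (k - 1) \<noteq> int k" using derange[of "k-1"] k1 by simp
  have "\<bar>\<sigma> ! (k - 1)\<bar> \<le> int k" using abs_range[of "k-1"] k1 by simp
  then have le: "\<sigma> ! (k - 1) \<le> int k" using abs_ge_self[of "\<sigma> ! (k - 1)"] by linarith
  define a where "a = nat (\<sigma> ! (k - 1)) - 1"
  have a: "a < k - 1" using pos ne le k1 by (simp add: a_def)
  have "phi g (\<sigma> ! (k - 1)) = int (P g a + 1)" using pos by (simp add: phi_def a_def)
  moreover have "P g a < P g (k - 1)" using P_less_iff[of a g "k-1"] a g k1 by simp
  ultimately have "0 < Pi g ! (?n - 1) \<and> Pi g ! (?n - 1) < int ?n" using v last by simp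
  then show ?thesis using Pi_signed[OF g] unfolding Delta_lt_def by simp
qed

end


context sig begin

lemma Pi_inj: assumes g: "length g = k" and g': "length g' = k" and e: "Pi g = Pi g'"
  shows "g = g'"
proof -
  have m: "map (P g) [0..<k] = map (P g') [0..<k]" using Pi_filter[OF g] Pi_filter[OF g'] e by metis
  then have Pe: "\<And>t. t < k \<Longrightarrow> P g t = P g' t" by (metis map_eq_conv atLeastLessThan_iff set_upt zero_le)
  show ?thesis
  proof (rule nth_equalityI)
    show "length g = length g'" using g g' by simp
    fix t assume t: "t < length g"
    show "g ! t = g' ! t"
    proof (cases t)
      case 0 then show ?thesis using Pe[of 0] t g g' by (simp add: P_def take_Suc_conv_app_nth)
    next
      case (Suc t0)
      then show ?thesis using Pe[of t] Pe[of t0] P_Suc[of t0 g] P_Suc[of t0 g'] t g g' by simp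
    qed
  qed
qed

lemma Pi_surj:
  assumes pi: "\<pi> \<in> Delta_lt n" and dp: "dp \<pi> = \<sigma>"
  shows "\<exists>g. length g = k \<and> sum_list g = n - k \<and> \<pi> = Pi g"
proof -
  have ln: "length \<pi> = n" and absset: "abs ` set \<pi> = {1..int n}"
    using pi by (auto simp: Delta_lt_def signed_perms_def)
  have lastc: "0 < \<pi> ! (n - 1)" "\<pi> ! (n - 1) < int n" using pi by (auto simp: Delta_lt_def)
  have dabs: "distinct (map abs \<pi>)"
  proof -
    have "card (set (map abs \<pi>)) = n" using absset by simp
    then show ?thesis using ln by (simp add: card_distinct)
  qed
  have absinj: "\<And>i j. i < n \<Longrightarrow> j < n \<Longrightarrow> \<bar>\<pi>!i\<bar> = \<bar>\<pi>!j\<bar> \<Longrightarrow> i = j"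
    using dabs ln unfolding distinct_conv_nth by (metis length_map nth_map)
  have absr: "\<And>i. i < n \<Longrightarrow> 1 \<le> \<bar>\<pi>!i\<bar> \<and> \<bar>\<pi>!i\<bar> \<le> int n"
    using absset ln by (metis atLeastAtMost_iff image_eqI nth_mem)
  have abss: "\<And>v. 1 \<le> v \<Longrightarrow> v \<le> int n \<Longrightarrow> \<exists>i<n. \<bar>\<pi>!i\<bar> = v"
  proof -
    fix v :: int assume "1 \<le> v" "v \<le> int n"
    then have "v \<in> abs ` set \<pi>" using absset by simp
    then show "\<exists>i<n. \<bar>\<pi>!i\<bar> = v" using ln by (auto simp: in_set_conv_nth)
  qed
  have n1: "n \<ge> 1" using lastc by (cases n) auto
  define Q where "Q = filter (\<lambda>i. \<pi> ! i \<noteq> int (i + 1)) [0..<n]"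
  define u where "u = map ((!) \<pi>) Q"
  have "dp \<pi> = reduction (map ((!) \<pi>) (filter (\<lambda>i. \<pi> ! i \<noteq> int (i + 1)) [0..<length \<pi>]))"
    unfolding dp_def dp_alt ..
  then have red: "reduction u = \<sigma>" using dp unfolding u_def Q_def ln by simp
  have "length (reduction u) = length Q" by (simp add: reduction_def u_def)
  then have lQ: "length Q = k" using red len_s by simp
  have Qsw: "sorted_wrt (<) Q" unfolding Q_def by (rule sorted_wrt_filter) (simp add: sorted_wrt_upt)
  have Qlt: "\<And>a b. a < b \<Longrightarrow> b < k \<Longrightarrow> Q ! a < Q ! b" using Qsw lQ sorted_wrt_nth_less by blast
  have Qle_iff: "\<And>a b. a < k \<Longrightarrow> b < k \<Longrightarrow> Q ! a \<le> Q ! b \<longleftrightarrow> a \<le> b"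
    using Qlt by (metis leD le_less_linear order.order_iff_strict)
  have setQ: "\<And>i. i \<in> set Q \<longleftrightarrow> i < n \<and> \<pi> ! i \<noteq> int (i + 1)" unfolding Q_def by auto
  have Qn: "\<And>a. a < k \<Longrightarrow> Q ! a < n" using setQ lQ nth_mem by blast
  have Qnf: "\<And>a. a < k \<Longrightarrow> \<pi> ! (Q ! a) \<noteq> int (Q ! a + 1)" using setQ lQ nth_mem by blast
  have fixd: "\<And>i. i < n \<Longrightarrow> i \<notin> set Q \<Longrightarrow> \<pi> ! i = int (i + 1)" using setQ by blast
  have "n - 1 \<in> set Q" using setQ lastc n1 by auto
  then obtain a0 where a0: "a0 < k" "Q ! a0 = n - 1" using lQ by (auto simp: in_set_conv_nth)
  have Qlast: "Q ! (k - 1) = n - 1"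
  proof -
    have "Q ! a0 \<le> Q ! (k - 1)" using Qle_iff[of a0 "k-1"] a0 by simp
    moreover have "Q ! (k - 1) < n" using Qn[of "k-1"] k1 by simp
    ultimately show ?thesis using a0 by simp
  qed
  define g where "g = map (\<lambda>t. if t = 0 then Q ! 0 else Q ! t - Q ! (t - 1) - 1) [0..<k]"
  have lg: "length g = k" by (simp add: g_def)
  have PQ: "\<And>t. t < k \<Longrightarrow> P g t = Q ! t"
  proof -
    fix t show "t < k \<Longrightarrow> P g t = Q ! t"
    proof (induction t)
      case 0 then show ?case by (simp add: P_def g_def take_Suc_conv_app_nth)
    next
      case (Suc t)
      have "Q ! t < Q ! Suc t" using Qlt Suc.prems by simp
      then show ?case using P_Suc[of t g] Suc lg by (simp add: g_def)
    qed
  qed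
  have sg: "sum_list g = n - k"
  proof -
    have "k - 1 + sum_list g = n - 1" using P_last[OF lg] PQ[of "k-1"] Qlast k1 by simp
    then show ?thesis using n1 k1 by simp
  qed
  have lPi: "length (Pi g) = n"
  proof -
    have "k - 1 + sum_list g = n - 1" using P_last[OF lg] PQ[of "k-1"] Qlast k1 by simp
    then show ?thesis using len_Pi[OF lg] n1 k1 by simp
  qed
  have setu: "abs ` set u = (\<lambda>a. int (Q ! a + 1)) ` {..<k}"
  proof (intro set_eqI iffI)
    fix y assume "y \<in> abs ` set u"
    then obtain s where s: "s < k" "y = \<bar>\<pi> ! (Q ! s)\<bar>" using lQ by (auto simp: u_def in_set_conv_nth)
    have r: "1 \<le> y" "y \<le> int n" using absr[OF Qn[OF s(1)]] s by auto
    define j where "j = nat y - 1"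
    have j: "j < n" "y = int (j + 1)" using r by (auto simp: j_def)
    have "j \<in> set Q"
    proof (rule ccontr)
      assume "j \<notin> set Q"
      then have "\<bar>\<pi> ! j\<bar> = y" using fixd[OF j(1)] j by simp
      then have "j = Q ! s" using absinj[OF j(1) Qn[OF s(1)]] s by simp
      then show False using \<open>j \<notin> set Q\<close> s lQ by (metis nth_mem)
    qed
    then obtain a where "a < k" "j = Q ! a" using lQ by (auto simp: in_set_conv_nth)
    then show "y \<in> (\<lambda>a. int (Q ! a + 1)) ` {..<k}" using j by auto
  next
    fix y assume "y \<in> (\<lambda>a. int (Q ! a + 1)) ` {..<k}"
    then obtain a where a: "a < k" "y = int (Q ! a + 1)" by auto
    obtain j where j: "j < n" "\<bar>\<pi> ! j\<bar> = y" using abss[of y] a Qn[OF a(1)] by auto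
    have "j \<in> set Q"
    proof (rule ccontr)
      assume "j \<notin> set Q"
      then have "j = Q ! a" using fixd[OF j(1)] j a by simp
      then show False using \<open>j \<notin> set Q\<close> a lQ by (metis nth_mem)
    qed
    then obtain s where s: "s < k" "j = Q ! s" using lQ by (auto simp: in_set_conv_nth)
    then show "y \<in> abs ` set u" using j lQ by (auto simp: u_def)
  qed
  have key: "\<And>t. t < k \<Longrightarrow> \<pi> ! (Q ! t) = phi g (\<sigma> ! t)"
  proof -
    fix t assume t: "t < k"
    let ?v = "\<pi> ! (Q ! t)"
    have ut: "u ! t = ?v" using t lQ by (simp add: u_def)
    have "\<bar>?v\<bar> \<in> abs ` set u" using t lQ by (auto simp: u_def)
    then obtain a where a: "a < k" "\<bar>?v\<bar> = int (Q ! a + 1)" using setu by auto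
    have "{y \<in> set (map abs u). y \<le> \<bar>?v\<bar>} = (\<lambda>a. int (Q ! a + 1)) ` {..a}"
      unfolding set_map setu a(2) using a(1) Qle_iff[of _ a] by (auto simp: image_iff)
    moreover have "card ((\<lambda>a. int (Q ! a + 1)) ` {..a}) = a + 1"
    proof -
      have inj: "inj_on (\<lambda>a. int (Q ! a + 1)) {..a}"
      proof (rule inj_onI)
        fix x y assume "x \<in> {..a}" "y \<in> {..a}" "int (Q ! x + 1) = int (Q ! y + 1)"
        then show "x = y" using Qle_iff[of x y] Qle_iff[of y x] a by auto
      qed
      have "card ((\<lambda>a. int (Q ! a + 1)) ` {..a}) = card {..a}" by (rule card_image[OF inj])
      then show ?thesis by simp
    qed
    ultimately have cd: "card {y \<in> set (map abs u). y \<le> \<bar>?v\<bar>} = a + 1" by simp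
    have st: "\<sigma> ! t = sgn ?v * int (a + 1)"
      using red[symmetric] t lQ cd ut by (simp add: reduction_def u_def)
    have vnz: "?v \<noteq> 0" using a(2) by auto
    have as: "nat \<bar>\<sigma> ! t\<bar> - 1 = a" using st vnz by (simp add: abs_mult abs_sgn_eq_1)
    have ss: "sgn (\<sigma> ! t) = sgn ?v" using st vnz by (simp add: sgn_mult)
    have "phi g (\<sigma> ! t) = sgn ?v * int (Q ! a + 1)" unfolding phi_def as ss PQ[OF a(1)] ..
    also have "\<dots> = sgn ?v * \<bar>?v\<bar>" using a(2) by simp
    also have "\<dots> = ?v" by (rule sgn_mult_abs)
    finally show "?v = phi g (\<sigma> ! t)" ..
  qed
  have "\<pi> = Pi g"
  proof (rule nth_equalityI)
    show "length \<pi> = length (Pi g)" using ln lPi by simp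
    fix i assume i: "i < length \<pi>"
    show "\<pi> ! i = Pi g ! i"
    proof (cases "i \<in> set Q")
      case True
      then obtain t where t: "t < k" "i = Q ! t" using lQ by (auto simp: in_set_conv_nth)
      then show ?thesis using key[OF t(1)] Pi_letter[OF lg t(1)] PQ[OF t(1)] by simp
    next
      case False
      have "\<forall>t<k. P g t \<noteq> i" using False PQ lQ by (metis nth_mem)
      then show ?thesis using fixd[of i] False i ln Pi_fixed[OF lg, of i] lPi by simp
    qed
  qed
  then show ?thesis using lg sg by blast
qed

end


lemma maj_snoc: "maj_prec (w @ [x]) = maj_prec w + (if w \<noteq> [] \<and> prec x (last w) then length w else 0)"
proof -
  let ?S = "{i. 1 \<le> i \<and> i < length w \<and> prec (w ! i) (w ! (i - 1))}"
  have eqS: "{i. 1 \<le> i \<and> i < length (w @ [x]) \<and> prec ((w @ [x]) ! i) ((w @ [x]) ! (i - 1))}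
      = ?S \<union> (if w \<noteq> [] \<and> prec x (last w) then {length w} else {})"
  proof (intro set_eqI iffI)
    fix i assume i: "i \<in> {i. 1 \<le> i \<and> i < length (w @ [x]) \<and> prec ((w @ [x]) ! i) ((w @ [x]) ! (i - 1))}"
    show "i \<in> ?S \<union> (if w \<noteq> [] \<and> prec x (last w) then {length w} else {})"
    proof (cases "i < length w")
      case True
      moreover have "i - 1 < length w" using True by simp
      ultimately show ?thesis using i by (auto simp: nth_append)
    next
      case False
      then have "i = length w" "w \<noteq> []" using i by auto
      then show ?thesis using i by (auto simp: nth_append last_conv_nth)
    qed
  next
    fix i assume i: "i \<in> ?S \<union> (if w \<noteq> [] \<and> prec x (last w) then {length w} else {})"
    show "i \<in> {i. 1 \<le> i \<and> i < length (w @ [x]) \<and> prec ((w @ [x]) ! i) ((w @ [x]) ! (i - 1))}"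
    proof (cases "i \<in> ?S")
      case True then show ?thesis by (auto simp: nth_append)
    next
      case False
      then have "w \<noteq> [] \<and> prec x (last w) \<and> i = length w" using i by (auto split: if_splits)
      then show ?thesis by (auto simp: nth_append last_conv_nth Suc_le_eq)
    qed
  qed
  have fin: "finite ?S" by simp
  show ?thesis unfolding maj_prec_def eqS
    by (auto simp: sum.union_disjoint fin)
qed

lemma maj_block: "length w = a \<Longrightarrow>
  maj_prec (w @ map (\<lambda>i. int (i + 1)) [a..<b])
   = maj_prec w + (if a < b \<and> w \<noteq> [] \<and> prec (int (a + 1)) (last w) then a else 0)"
proof (induction b)
  case 0 then show ?case by simp
next
  case (Suc b)
  show ?case
  proof (cases "a \<le> b")
    case False
    then have "b < a" by simp
    then show ?thesis using Suc by (simp add: not_less_eq_eq)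
  next
    case True
    have e: "w @ map (\<lambda>i. int (i + 1)) [a..<Suc b] = (w @ map (\<lambda>i. int (i + 1)) [a..<b]) @ [int (b + 1)]"
      using True by simp
    show ?thesis
    proof (cases "a = b")
      case True
      then show ?thesis unfolding e using Suc by (simp add: maj_snoc)
    next
      case False
      then have ab: "a < b" using True by simp
      have "last (w @ map (\<lambda>i. int (i + 1)) [a..<b]) = int b"
        using ab by (simp add: last_map)
      then have np: "\<not> prec (int (b + 1)) (last (w @ map (\<lambda>i. int (i + 1)) [a..<b]))"
        by (simp add: prec_def)
      show ?thesis unfolding e maj_snoc using Suc ab np by simp
    qed
  qed
qed

lemma last_block: "a < b \<Longrightarrow> last (w @ map (\<lambda>i. int (i + 1)) [a..<b]) = int b"
  by (simp add: last_map)

lemma nat_minus_lt: "0 < (x::int) \<Longrightarrow> x \<le> int k \<Longrightarrow> nat x - 1 < k" by arith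

context sig begin

definition lo :: "nat \<Rightarrow> bool" where "lo t \<longleftrightarrow> \<sigma> ! t < int (t + 1)"
definition dd :: "nat \<Rightarrow> bool" where "dd t \<longleftrightarrow> prec (\<sigma> ! t) (\<sigma> ! (t - 1))"

lemma prec_first_fixed:
  assumes g: "length g = k" and t: "0 < t" "t < k" and h: "g ! t > 0"
  shows "prec (int (P g (t - 1) + 2)) (phi g (\<sigma> ! (t - 1))) \<longleftrightarrow> \<not> lo (t - 1)"
proof -
  have Pt: "P g t = P g (t - 1) + 1 + g ! t" using P_Suc[of "t-1" g] t g by simp
  have nd: "\<sigma> ! (t - 1) \<noteq> int t" using derange[of "t-1"] t by simp
  show ?thesis
  proof (cases "\<sigma> ! (t - 1) > 0")
    case False
    then have "phi g (\<sigma> ! (t - 1)) \<le> 0" using phi_pos by (meson not_less)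
    then show ?thesis using False by (auto simp: prec_def lo_def)
  next
    case True
    define c where "c = nat (\<sigma> ! (t - 1)) - 1"
    have cr: "c < k" using abs_range[of "t-1"] t True nat_minus_lt[of "\<sigma> ! (t - 1)" k] by (auto simp: c_def)
    have ph: "phi g (\<sigma> ! (t - 1)) = int (P g c + 1)" using True by (simp add: phi_def c_def)
    show ?thesis
    proof (cases "t \<le> c")
      case True
      then have "P g t \<le> P g c" using P_le_iff[of t g c] cr t g by simp
      moreover have "\<not> lo (t - 1)" using True \<open>\<sigma> ! (t - 1) > 0\<close> by (auto simp: lo_def c_def)
      ultimately show ?thesis using ph Pt h \<open>\<sigma> ! (t - 1) > 0\<close> by (auto simp: prec_def)
    next
      case False
      then have "P g c \<le> P g (t - 1)" using P_le_iff[of c g "t - 1"] cr t g by simp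
      moreover have "lo (t - 1)" using False \<open>\<sigma> ! (t - 1) > 0\<close> t nd unfolding lo_def c_def by arith
      ultimately show ?thesis using ph by (auto simp: prec_def)
    qed
  qed
qed

lemma prec_last_fixed:
  assumes g: "length g = k" and t: "t < k" and h: "g ! t > 0"
  shows "prec (phi g (\<sigma> ! t)) (int (P g t)) \<longleftrightarrow> lo t"
proof -
  have Ppos: "P g t > 0"
  proof -
    have "g ! t \<le> sum_list (take (Suc t) g)"
      using t g by (simp add: take_Suc_conv_app_nth)
    then show ?thesis using h by (simp add: P_def)
  qed
  show ?thesis
  proof (cases "\<sigma> ! t > 0")
    case False
    then have "\<sigma> ! t < 0" using s_nz[OF t] by simp
    then have "phi g (\<sigma> ! t) < 0" using phi_neg by blast
    then show ?thesis using \<open>\<sigma> ! t < 0\<close> Ppos by (auto simp: prec_def lo_def)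
  next
    case True
    define c where "c = nat (\<sigma> ! t) - 1"
    have cr: "c < k" using abs_range[of t] t True nat_minus_lt[of "\<sigma> ! t" k] by (auto simp: c_def)
    have ph: "phi g (\<sigma> ! t) = int (P g c + 1)" using True by (simp add: phi_def c_def)
    show ?thesis
    proof (cases "c < t")
      case True
      then have t0: "0 < t" by simp
      have "P g c \<le> P g (t - 1)" using P_le_iff[of c g "t-1"] cr t g True by simp
      moreover have "P g t = P g (t - 1) + 1 + g ! t" using P_Suc[of "t-1" g] t0 t g by simp
      moreover have "lo t" using True \<open>\<sigma> ! t > 0\<close> by (auto simp: lo_def c_def)
      ultimately show ?thesis using ph h \<open>\<sigma> ! t > 0\<close> by (auto simp: prec_def)
    next
      case False
      then have "P g t \<le> P g c" using P_le_iff[of t g c] cr t g by simp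
      moreover have "\<not> lo t" using False \<open>\<sigma> ! t > 0\<close> by (auto simp: lo_def c_def)
      ultimately show ?thesis using ph \<open>\<sigma> ! t > 0\<close> by (auto simp: prec_def)
    qed
  qed
qed

lemma maj_W: assumes g: "length g = k" shows "j \<le> k \<Longrightarrow> maj_prec (W g j) = Mf lo dd (take j g)"
proof (induction j)
  case 0 then show ?case by (simp add: Mf_def maj_prec_def)
next
  case (Suc t)
  then have t: "t < k" by simp
  define s where "s = sum_list (take t g)"
  define h where "h = g ! t"
  have lw: "length (W g t) = t + s"
  proof (cases t)
    case 0 then show ?thesis by (simp add: s_def)
  next
    case (Suc t0)
    then show ?thesis using len_W[OF g, of t] t by (simp add: P_def s_def)
  qed
  have Pt: "P g t = t + s + h"
    using t g by (simp add: P_def s_def h_def take_Suc_conv_app_nth)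
  have tk: "take (Suc t) g = take t g @ [h]" using t g by (simp add: take_Suc_conv_app_nth h_def)
  have Mf: "Mf lo dd (take (Suc t) g) = Mf lo dd (take t g) + contrib lo dd t s h"
    unfolding tk Mf_snoc using t g by (simp add: s_def)
  have Wne: "W g t \<noteq> [] \<longleftrightarrow> 0 < t" using lw by (cases t) (auto simp: s_def)
  have lastW: "0 < t \<Longrightarrow> last (W g t) = phi g (\<sigma> ! (t - 1))"
    by (cases t) auto
  let ?B = "map (\<lambda>i. int (i + 1)) [length (W g t)..<P g t]"
  have WS: "W g (Suc t) = (W g t @ ?B) @ [phi g (\<sigma> ! t)]" by simp
  show ?case
  proof (cases "h = 0")
    case True
    then have B: "?B = []" using lw Pt by simp
    have m0: "maj_prec (W g (Suc t)) = maj_prec (W g t) + (if W g t \<noteq> [] \<and> prec (phi g (\<sigma> ! t)) (last (W g t)) then length (W g t) else 0)"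
      unfolding WS B by (simp add: maj_snoc)
    have "maj_prec (W g (Suc t)) = maj_prec (W g t) + (if 0 < t \<and> prec (phi g (\<sigma> ! t)) (phi g (\<sigma> ! (t - 1))) then t + s else 0)"
    proof (cases "t = 0")
      case True then show ?thesis using m0 Wne by simp
    next
      case False then show ?thesis using m0 Wne lastW lw by simp
    qed
    moreover have "0 < t \<Longrightarrow> prec (phi g (\<sigma> ! t)) (phi g (\<sigma> ! (t - 1))) \<longleftrightarrow> dd t"
      using phi_transfer[OF g t, of "t-1"] t by (simp add: dd_def)
    ultimately show ?thesis using Suc.IH t Mf True by (auto simp: contrib_def)
  next
    case False
    have lt: "length (W g t) < P g t" using lw Pt False by simp
    have m1: "maj_prec (W g t @ ?B) = maj_prec (W g t) + (if 0 < t \<and> prec (int (t + s + 1)) (phi g (\<sigma> ! (t - 1))) then t + s else 0)"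
      using maj_block[of "W g t" "t + s" "P g t"] lw lt Wne lastW by auto
    have lastB: "last (W g t @ ?B) = int (P g t)" using last_block[OF lt] .
    have m2: "maj_prec (W g (Suc t)) = maj_prec (W g t @ ?B) + (if prec (phi g (\<sigma> ! t)) (int (P g t)) then P g t else 0)"
    proof -
      have ne: "W g t @ ?B \<noteq> []" using lt by simp
      have ln: "length (W g t @ ?B) = P g t" using lt by simp
      show ?thesis unfolding WS maj_snoc lastB using ne ln by simp
    qed
    have c1: "0 < t \<Longrightarrow> prec (int (t + s + 1)) (phi g (\<sigma> ! (t - 1))) \<longleftrightarrow> \<not> lo (t - 1)"
    proof -
      assume t0: "0 < t"
      have "P g (t - 1) + 1 = t + s" using lw len_W[OF g, of t] t t0 by simp
      then have "int (t + s + 1) = int (P g (t - 1) + 2)" by simp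
      then show ?thesis using prec_first_fixed[OF g t0 t] False by (simp add: h_def)
    qed
    have c2: "prec (phi g (\<sigma> ! t)) (int (P g t)) \<longleftrightarrow> lo t"
      using prec_last_fixed[OF g t] False by (simp add: h_def)
    show ?thesis using m1 m2 c1 c2 Suc.IH t Mf False Pt by (auto simp: contrib_def)
  qed
qed

lemma maj_Pi: "length g = k \<Longrightarrow> maj_prec (Pi g) = Mf lo dd g"
  unfolding Pi_def using maj_W[of g k] by simp

lemma lo_dd_1: "1 \<le> t \<Longrightarrow> t < k \<Longrightarrow> \<not> lo (t - 1) \<Longrightarrow> lo t \<Longrightarrow> dd t"
proof -
  assume t: "1 \<le> t" "t < k" and a: "\<not> lo (t - 1)" and b: "lo t"
  have "\<sigma> ! (t - 1) \<ge> int t" using a t by (simp add: lo_def)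
  moreover have "\<sigma> ! (t - 1) \<noteq> int t" using derange[of "t-1"] t by simp
  moreover have "\<sigma> ! t \<noteq> 0" using s_nz t by simp
  ultimately show "dd t" using b t by (auto simp: dd_def lo_def prec_def)
qed

lemma lo_dd_2: "1 \<le> t \<Longrightarrow> t < k \<Longrightarrow> lo (t - 1) \<Longrightarrow> \<not> lo t \<Longrightarrow> \<not> dd t"
proof -
  assume t: "1 \<le> t" "t < k" and a: "lo (t - 1)" and b: "\<not> lo t"
  have "\<sigma> ! (t - 1) < int t" using a t by (simp add: lo_def)
  moreover have "\<sigma> ! t \<ge> int (t + 1)" using b by (simp add: lo_def)
  ultimately show "\<not> dd t" using t by (auto simp: dd_def prec_def)
qed

lemma pm_maj: "pm dd k = maj_prec \<sigma>"
proof -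
  have "{i. 1 \<le> i \<and> i < length \<sigma> \<and> prec (\<sigma> ! i) (\<sigma> ! (i - 1))} = {i\<in>{1..<k}. dd i}"
    using len_s by (auto simp: dd_def)
  then have "maj_prec \<sigma> = (\<Sum>i\<in>{i\<in>{1..<k}. dd i}. i)" by (simp add: maj_prec_def)
  also have "\<dots> = pm dd k" unfolding pm_def by (rule sum.inter_filter) simp
  finally show ?thesis ..
qed

end


context sig begin

lemma neg_Pi: assumes g: "length g = k" shows "neg (Pi g) = neg \<sigma>"
proof -
  have "{i. i < length (Pi g) \<and> Pi g ! i < 0} = P g ` {t. t < k \<and> \<sigma> ! t < 0}"
  proof (intro set_eqI iffI)
    fix i assume i: "i \<in> {i. i < length (Pi g) \<and> Pi g ! i < 0}"
    show "i \<in> P g ` {t. t < k \<and> \<sigma> ! t < 0}"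
    proof (cases "i \<in> P g ` {..<k}")
      case True
      then obtain t where "t < k" "i = P g t" by auto
      then show ?thesis using i Pi_letter[OF g] phi_neg by auto
    next
      case False
      then have "\<forall>t<k. P g t \<noteq> i" by auto
      then show ?thesis using i Pi_fixed[OF g] by fastforce
    qed
  next
    fix i assume "i \<in> P g ` {t. t < k \<and> \<sigma> ! t < 0}"
    then obtain t where "t < k" "\<sigma> ! t < 0" "i = P g t" by auto
    then show "i \<in> {i. i < length (Pi g) \<and> Pi g ! i < 0}" using Pi_letter[OF g] phi_neg P_lt_len[OF g] by auto
  qed
  moreover have "inj_on (P g) {t. t < k \<and> \<sigma> ! t < 0}" using g by (auto simp: inj_on_def intro: P_inj)
  ultimately show ?thesis unfolding neg_def using len_s by (simp add: card_image)
qed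

end


locale sigg = sig +
  fixes g :: "nat list"
  assumes g: "length g = k"
begin

abbreviation "w \<equiv> Pi g"
abbreviation "n \<equiv> length (Pi g)"
definition "isL i \<longleftrightarrow> i \<in> P g ` {..<k}"
definition "Fx = {f. f < n \<and> \<not> isL f}"

lemma vfix: "i < n \<Longrightarrow> \<not> isL i \<Longrightarrow> w ! i = int (i + 1)"
  using Pi_fixed[OF g] by (auto simp: isL_def)

lemma wsp: "w \<in> signed_perms n" using Pi_signed[OF g] len_Pi[OF g] by simp

lemma absset: "abs ` set w = {1..int n}" using wsp by (simp add: signed_perms_def)

lemma absinj: "i < n \<Longrightarrow> j < n \<Longrightarrow> \<bar>w ! i\<bar> = \<bar>w ! j\<bar> \<Longrightarrow> i = j"
proof -
  have "card (set (map abs w)) = n" using absset by simp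
  then have "distinct (map abs w)" by (simp add: card_distinct)
  then show "i < n \<Longrightarrow> j < n \<Longrightarrow> \<bar>w ! i\<bar> = \<bar>w ! j\<bar> \<Longrightarrow> i = j"
    unfolding distinct_conv_nth by (metis length_map nth_map)
qed

lemma absr: "i < n \<Longrightarrow> 1 \<le> \<bar>w ! i\<bar> \<and> \<bar>w ! i\<bar> \<le> int n"
  using absset by (metis atLeastAtMost_iff image_eqI nth_mem)

lemma card_abs_le: "f \<le> n \<Longrightarrow> card {p. p < n \<and> \<bar>w ! p\<bar> \<le> int f} = f"
proof -
  assume f: "f \<le> n"
  have inj: "inj_on (\<lambda>p. \<bar>w ! p\<bar>) {p. p < n \<and> \<bar>w ! p\<bar> \<le> int f}"
    by (auto simp: inj_on_def intro: absinj)
  have "(\<lambda>p. \<bar>w ! p\<bar>) ` {p. p < n \<and> \<bar>w ! p\<bar> \<le> int f} = {1..int f}"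
  proof (intro set_eqI iffI)
    fix y assume "y \<in> (\<lambda>p. \<bar>w ! p\<bar>) ` {p. p < n \<and> \<bar>w ! p\<bar> \<le> int f}"
    then show "y \<in> {1..int f}" using absr by auto
  next
    fix y assume y: "y \<in> {1..int f}"
    then have "y \<in> abs ` set w" using absset f by auto
    then obtain p where "p < n" "\<bar>w ! p\<bar> = y" by (auto simp: in_set_conv_nth)
    then show "y \<in> (\<lambda>p. \<bar>w ! p\<bar>) ` {p. p < n \<and> \<bar>w ! p\<bar> \<le> int f}" using y by force
  qed
  then show ?thesis using card_image[OF inj] by simp
qed

lemma per_fixed:
  assumes f: "f \<in> Fx"
  shows "int (card {p. p < f \<and> w ! p > int (f + 1)}) + int (card {p. f < p \<and> p < n \<and> w ! p < int (f + 1)})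
        + int (card {p. p < n \<and> w ! p < 0 \<and> \<bar>w ! p\<bar> > int (f + 1)})
        = 2 * int (card {p. p < f \<and> \<bar>w ! p\<bar> > int (f + 1)})
          + 2 * int (card {p. f < p \<and> p < n \<and> w ! p < 0 \<and> \<bar>w ! p\<bar> > int (f + 1)})"
proof -
  have fn: "f < n" and vf: "w ! f = int (f + 1)" using f vfix by (auto simp: Fx_def)
  define A where "A = {p. p < f \<and> \<bar>w ! p\<bar> > int (f + 1)}"
  define NL where "NL = {p. p < f \<and> w ! p < 0 \<and> \<bar>w ! p\<bar> > int (f + 1)}"
  define B where "B = {p. f < p \<and> p < n \<and> \<bar>w ! p\<bar> < int (f + 1)}"
  define NG where "NG = {p. f < p \<and> p < n \<and> w ! p < 0 \<and> \<bar>w ! p\<bar> > int (f + 1)}"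
  define C where "C = {p. p < f \<and> \<bar>w ! p\<bar> \<le> int f}"
  have ne: "\<And>p. p < n \<Longrightarrow> p \<noteq> f \<Longrightarrow> \<bar>w ! p\<bar> \<noteq> int (f + 1)"
    using absinj[OF _ fn] vf by force
  have X: "{p. p < f \<and> w ! p > int (f + 1)} = A - NL" by (auto simp: A_def NL_def)
  have cX: "card (A - NL) = card A - card NL" by (rule card_Diff_subset) (auto simp: NL_def A_def)
  have NLA: "card NL \<le> card A" by (rule card_mono) (auto simp: NL_def A_def)
  have Y: "{p. f < p \<and> p < n \<and> w ! p < int (f + 1)} = B \<union> NG"
  proof (intro set_eqI iffI)
    fix p assume p: "p \<in> {p. f < p \<and> p < n \<and> w ! p < int (f + 1)}"
    then have "\<bar>w ! p\<bar> \<noteq> int (f + 1)" using ne by auto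
    then show "p \<in> B \<union> NG" using p by (auto simp: B_def NG_def abs_if)
  qed (auto simp: B_def NG_def abs_if split: if_splits)
  have cY: "card (B \<union> NG) = card B + card NG" by (rule card_Un_disjoint) (auto simp: B_def NG_def)
  have N: "{p. p < n \<and> w ! p < 0 \<and> \<bar>w ! p\<bar> > int (f + 1)} = NL \<union> NG"
    using fn vf apply (auto simp: NL_def NG_def)
    subgoal for x by (cases "x = f") auto
    done
  have cN: "card (NL \<union> NG) = card NL + card NG" by (rule card_Un_disjoint) (auto simp: NL_def NG_def)
  have c1: "f = card C + card A"
  proof -
    have "{..<f} = C \<union> A"
    proof (intro set_eqI iffI)
      fix p assume "p \<in> {..<f}"
      then have "p < n" "p \<noteq> f" using fn by auto
      then have "\<bar>w ! p\<bar> \<noteq> int (f + 1)" using ne by blast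
      then show "p \<in> C \<union> A" using \<open>p \<in> {..<f}\<close> by (auto simp: C_def A_def)
    qed (auto simp: C_def A_def)
    moreover have "card (C \<union> A) = card C + card A" by (rule card_Un_disjoint) (auto simp: C_def A_def)
    ultimately show ?thesis by (metis card_lessThan)
  qed
  have c2: "f = card C + card B"
  proof -
    have "{p. p < n \<and> \<bar>w ! p\<bar> \<le> int f} = C \<union> B"
    proof (intro set_eqI iffI)
      fix p assume p: "p \<in> {p. p < n \<and> \<bar>w ! p\<bar> \<le> int f}"
      then have "p \<noteq> f" using vf by auto
      then show "p \<in> C \<union> B" using p by (auto simp: C_def B_def)
    qed (use fn in \<open>auto simp: C_def B_def\<close>)
    moreover have "card (C \<union> B) = card C + card B" by (rule card_Un_disjoint) (auto simp: C_def B_def)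
    ultimately show ?thesis using card_abs_le[of f] fn by simp
  qed
  show ?thesis unfolding X Y N cX cY cN A_def[symmetric] NG_def[symmetric]
    using c1 c2 NLA by simp
qed


lemma finFx: "finite Fx" by (simp add: Fx_def)

lemma isL_lt: "isL i \<Longrightarrow> i < n" using P_lt_len[OF g] by (auto simp: isL_def)

lemma inv_decomp:
  "inv_count w = inv_count \<sigma> + (\<Sum>f\<in>Fx. card {p. p < f \<and> w ! p > int (f + 1)})
       + (\<Sum>f\<in>Fx. card {p. f < p \<and> p < n \<and> w ! p < int (f + 1)})"
proof -
  define I where "I = {(i, j). i < j \<and> j < n \<and> w ! i > w ! j}"
  define ILL where "ILL = {(i, j). i < j \<and> j < n \<and> w ! i > w ! j \<and> isL i \<and> isL j}"
  define ILF where "ILF = {(i, j). i < j \<and> j < n \<and> w ! i > w ! j \<and> \<not> isL j}"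
  define IFL where "IFL = {(i, j). i < j \<and> j < n \<and> w ! i > w ! j \<and> \<not> isL i}"
  have fin: "finite ILL" "finite ILF" "finite IFL"
    by (rule finite_subset[of _ "{..<n} \<times> {..<n}"]; auto simp: ILL_def ILF_def IFL_def)+
  have FF: "\<And>i j. i < j \<Longrightarrow> j < n \<Longrightarrow> \<not> isL i \<Longrightarrow> \<not> isL j \<Longrightarrow> \<not> w ! i > w ! j"
    using vfix by simp
  have IU: "I = ILL \<union> ILF \<union> IFL" by (auto simp: I_def ILL_def ILF_def IFL_def)
  have d1: "(ILL \<union> ILF) \<inter> IFL = {}" using FF by (auto simp: ILL_def ILF_def IFL_def)
  have d2: "ILL \<inter> ILF = {}" by (auto simp: ILL_def ILF_def)
  have cI: "card I = card ILL + card ILF + card IFL"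
    unfolding IU using fin d1 d2 by (simp add: card_Un_disjoint)
  have "ILL = (\<lambda>(a, b). (P g a, P g b)) ` {(a, b). a < b \<and> b < length \<sigma> \<and> \<sigma> ! a > \<sigma> ! b}"
  proof (intro set_eqI iffI)
    fix x assume "x \<in> ILL"
    then obtain i j where x: "x = (i, j)" "i < j" "j < n" "w ! i > w ! j" "isL i" "isL j"
      by (auto simp: ILL_def)
    then obtain a b where ab: "a < k" "b < k" "i = P g a" "j = P g b" by (auto simp: isL_def)
    then have "a < b" using P_less_iff[of a g b] g x by simp
    moreover have "\<sigma> ! a > \<sigma> ! b" using x ab Pi_letter[OF g] phi_transfer[OF g ab(2) ab(1)] by simp
    ultimately show "x \<in> (\<lambda>(a, b). (P g a, P g b)) ` {(a, b). a < b \<and> b < length \<sigma> \<and> \<sigma> ! a > \<sigma> ! b}"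
      using x ab len_s by auto
  next
    fix x assume "x \<in> (\<lambda>(a, b). (P g a, P g b)) ` {(a, b). a < b \<and> b < length \<sigma> \<and> \<sigma> ! a > \<sigma> ! b}"
    then obtain a b where x: "x = (P g a, P g b)" "a < b" "b < k" "\<sigma> ! a > \<sigma> ! b" using len_s by auto
    then have "P g a < P g b" using P_less_iff[of a g b] g by simp
    moreover have "w ! P g a > w ! P g b" using x Pi_letter[OF g] phi_transfer[OF g, of b a] by simp
    ultimately show "x \<in> ILL" using x P_lt_len[OF g] by (auto simp: ILL_def isL_def)
  qed
  moreover have "inj_on (\<lambda>(a, b). (P g a, P g b)) {(a, b). a < b \<and> b < length \<sigma> \<and> \<sigma> ! a > \<sigma> ! b}"
    using len_s g P_inj[of _ g] by (auto simp: inj_on_def)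
  ultimately have cLL: "card ILL = inv_count \<sigma>" by (simp add: inv_count_def card_image)
  have "ILF = (\<lambda>(f, p). (p, f)) ` (SIGMA f:Fx. {p. p < f \<and> w ! p > int (f + 1)})"
    using vfix by (auto simp: ILF_def Fx_def image_iff)
  moreover have "inj_on (\<lambda>(f, p). (p, f)) (SIGMA f:Fx. {p. p < f \<and> w ! p > int (f + 1)})"
    by (auto simp: inj_on_def)
  ultimately have cLF: "card ILF = (\<Sum>f\<in>Fx. card {p. p < f \<and> w ! p > int (f + 1)})"
    using finFx by (simp add: card_image card_SigmaI)
  have "IFL = (SIGMA f:Fx. {p. f < p \<and> p < n \<and> w ! p < int (f + 1)})"
    using vfix by (auto simp: IFL_def Fx_def)
  then have cFL: "card IFL = (\<Sum>f\<in>Fx. card {p. f < p \<and> p < n \<and> w ! p < int (f + 1)})"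
    using finFx by (simp add: card_SigmaI)
  show ?thesis using cI cLL cLF cFL by (simp add: inv_count_def I_def)
qed


definition "T = {t. t < k \<and> \<sigma> ! t < 0}"
definition "cc t = nat \<bar>\<sigma> ! t\<bar> - 1"

lemma finT: "finite T" by (simp add: T_def)

lemma cc_lt: "t < k \<Longrightarrow> cc t < k" using abs_range[of t] by (auto simp: cc_def)

lemma negpos: "{i. i < n \<and> w ! i < 0} = P g ` T"
proof (intro set_eqI iffI)
  fix i assume i: "i \<in> {i. i < n \<and> w ! i < 0}"
  show "i \<in> P g ` T"
  proof (cases "isL i")
    case True
    then obtain t where "t < k" "i = P g t" by (auto simp: isL_def)
    then show ?thesis using i Pi_letter[OF g] phi_neg by (auto simp: T_def)
  next
    case False
    then show ?thesis using i vfix by fastforce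
  qed
next
  fix i assume "i \<in> P g ` T"
  then obtain t where "t < k" "\<sigma> ! t < 0" "i = P g t" by (auto simp: T_def)
  then show "i \<in> {i. i < n \<and> w ! i < 0}" using Pi_letter[OF g] phi_neg P_lt_len[OF g] by auto
qed

lemma injT: "inj_on (P g) T" using g by (auto simp: inj_on_def T_def intro: P_inj)

lemma w_T: "t \<in> T \<Longrightarrow> w ! P g t = - int (P g (cc t) + 1)"
  using Pi_letter[OF g] by (auto simp: T_def phi_def cc_def)

lemma s_T: "t \<in> T \<Longrightarrow> \<sigma> ! t = - int (cc t + 1)"
  using abs_range[of t] by (auto simp: T_def cc_def)

lemma negsum_w: "(\<Sum>i\<in>{i. i < n \<and> w ! i < 0}. w ! i) = - (\<Sum>t\<in>T. int (P g (cc t) + 1))"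
  unfolding negpos by (simp add: sum.reindex[OF injT] w_T) (subst sum_negf[symmetric], simp)

lemma negsum_s: "(\<Sum>i\<in>{i. i < length \<sigma> \<and> \<sigma> ! i < 0}. \<sigma> ! i) = - (\<Sum>t\<in>T. int (cc t + 1))"
proof -
  have "{i. i < length \<sigma> \<and> \<sigma> ! i < 0} = T" using len_s by (auto simp: T_def)
  then show ?thesis by (simp add: s_T) (subst sum_negf[symmetric], simp)
qed

lemma card_fixed_below: "c < k \<Longrightarrow> card {f \<in> Fx. f < P g c} = P g c - c"
proof -
  assume c: "c < k"
  have Pn: "P g c < n" using P_lt_len[OF g c] .
  have U: "{..<P g c} = {f \<in> Fx. f < P g c} \<union> P g ` {..<c}"
  proof (intro set_eqI iffI)
    fix i assume i: "i \<in> {..<P g c}"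
    show "i \<in> {f \<in> Fx. f < P g c} \<union> P g ` {..<c}"
    proof (cases "isL i")
      case True
      then obtain t where t: "t < k" "i = P g t" by (auto simp: isL_def)
      then have "t < c" using i P_less_iff[of t g c] g c by simp
      then show ?thesis using t by auto
    next
      case False then show ?thesis using i Pn by (auto simp: Fx_def)
    qed
  next
    fix i assume "i \<in> {f \<in> Fx. f < P g c} \<union> P g ` {..<c}"
    then show "i \<in> {..<P g c}" using P_less_iff[of _ g c] g c by auto
  qed
  have D: "{f \<in> Fx. f < P g c} \<inter> P g ` {..<c} = {}" using c by (auto simp: Fx_def isL_def)
  have inj: "inj_on (P g) {..<c}"
  proof (rule inj_onI)
    fix x y assume "x \<in> {..<c}" "y \<in> {..<c}" "P g x = P g y"
    then show "x = y" using P_inj[of x g y] g c by auto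
  qed
  have "P g c = card {f \<in> Fx. f < P g c} + c"
    using arg_cong[OF U, of card] D card_image[OF inj] by (simp add: card_Un_disjoint finFx)
  then show ?thesis by simp
qed

lemma Nsum: "(\<Sum>f\<in>Fx. card {p. p < n \<and> w ! p < 0 \<and> \<bar>w ! p\<bar> > int (f + 1)})
     = (\<Sum>t\<in>T. P g (cc t) - cc t)"
proof -
  have "(\<Sum>f\<in>Fx. card {p. p < n \<and> w ! p < 0 \<and> \<bar>w ! p\<bar> > int (f + 1)})
      = card (SIGMA f:Fx. {p. p < n \<and> w ! p < 0 \<and> \<bar>w ! p\<bar> > int (f + 1)})"
    using finFx by (simp add: card_SigmaI)
  also have "(SIGMA f:Fx. {p. p < n \<and> w ! p < 0 \<and> \<bar>w ! p\<bar> > int (f + 1)})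
      = (\<lambda>(p, f). (f, p)) ` (SIGMA p:{i. i < n \<and> w ! i < 0}. {f \<in> Fx. int (f + 1) < \<bar>w ! p\<bar>})"
    by (auto simp: image_iff)
  also have "card \<dots> = card (SIGMA p:{i. i < n \<and> w ! i < 0}. {f \<in> Fx. int (f + 1) < \<bar>w ! p\<bar>})"
    by (rule card_image) (auto simp: inj_on_def)
  also have "\<dots> = (\<Sum>p\<in>{i. i < n \<and> w ! i < 0}. card {f \<in> Fx. int (f + 1) < \<bar>w ! p\<bar>})"
    using finFx by (simp add: card_SigmaI)
  also have "\<dots> = (\<Sum>t\<in>T. card {f \<in> Fx. int (f + 1) < \<bar>w ! P g t\<bar>})"
    unfolding negpos by (simp add: sum.reindex[OF injT])
  also have "\<dots> = (\<Sum>t\<in>T. P g (cc t) - cc t)"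
  proof (rule sum.cong[OF refl])
    fix t assume t: "t \<in> T"
    have "{f \<in> Fx. int (f + 1) < \<bar>w ! P g t\<bar>} = {f \<in> Fx. f < P g (cc t)}"
      using w_T[OF t] by auto
    then show "card {f \<in> Fx. int (f + 1) < \<bar>w ! P g t\<bar>} = P g (cc t) - cc t"
      using card_fixed_below[OF cc_lt] t by (simp add: T_def)
  qed
  finally show ?thesis .
qed

lemma cc_le_P: "t < k \<Longrightarrow> cc t \<le> P g (cc t)" by (simp add: P_def)

lemma ellB_parity: "even (ellB w - ellB \<sigma>)"
proof -
  let ?X = "\<lambda>f. int (card {p. p < f \<and> w ! p > int (f + 1)})"
  let ?Y = "\<lambda>f. int (card {p. f < p \<and> p < n \<and> w ! p < int (f + 1)})"
  let ?N = "\<lambda>f. int (card {p. p < n \<and> w ! p < 0 \<and> \<bar>w ! p\<bar> > int (f + 1)})"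
  let ?A = "\<lambda>f. int (card {p. p < f \<and> \<bar>w ! p\<bar> > int (f + 1)})"
  let ?G = "\<lambda>f. int (card {p. f < p \<and> p < n \<and> w ! p < 0 \<and> \<bar>w ! p\<bar> > int (f + 1)})"
  have e1: "ellB w = int (inv_count \<sigma>) + (\<Sum>f\<in>Fx. ?X f) + (\<Sum>f\<in>Fx. ?Y f) + (\<Sum>t\<in>T. int (P g (cc t) + 1))"
    unfolding ellB_def inv_decomp negsum_w by simp
  have e2: "ellB \<sigma> = int (inv_count \<sigma>) + (\<Sum>t\<in>T. int (cc t + 1))"
    unfolding ellB_def negsum_s by simp
  have e3: "(\<Sum>t\<in>T. int (P g (cc t) + 1)) - (\<Sum>t\<in>T. int (cc t + 1)) = (\<Sum>f\<in>Fx. ?N f)"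
  proof -
    have "(\<Sum>f\<in>Fx. ?N f) = int (\<Sum>t\<in>T. P g (cc t) - cc t)" unfolding Nsum[symmetric] by simp
    also have "\<dots> = (\<Sum>t\<in>T. int (P g (cc t)) - int (cc t))"
      using cc_le_P by (simp add: T_def of_nat_diff)
    finally show ?thesis by (simp add: sum_subtractf sum.distrib)
  qed
  have "ellB w - ellB \<sigma> = (\<Sum>f\<in>Fx. ?X f + ?Y f + ?N f)"
    using e1 e2 e3 by (simp add: sum.distrib)
  also have "\<dots> = (\<Sum>f\<in>Fx. 2 * (?A f + ?G f))"
    by (rule sum.cong[OF refl]) (use per_fixed in simp)
  also have "\<dots> = 2 * (\<Sum>f\<in>Fx. ?A f + ?G f)" by (simp add: sum_distrib_left)
  finally show ?thesis by simp
qed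

end


context sig begin

lemma parity_Pi: "length g = k \<Longrightarrow> even (ellB (Pi g) - ellB \<sigma>)"
proof -
  assume g: "length g = k"
  interpret sigg \<sigma> k g by unfold_locales (rule g)
  show ?thesis by (rule ellB_parity)
qed

end

lemma powi_parity:
  fixes e :: real
  assumes e: "e = 1 \<or> e = -1" and ev: "even (a - b)"
  shows "e powi a = e powi b"
proof -
  obtain m where m: "a = b + 2 * m" using ev by (metis dvd_def add_diff_cancel_left' diff_add_cancel)
  have ne: "e \<noteq> 0" using e by auto
  have "e powi (2 * m) = (e powi 2) powi m" by (rule power_int_mult)
  also have "e powi 2 = 1" using e by auto
  finally have "e powi (2 * m) = 1" by simp
  then show ?thesis unfolding m using power_int_add[of e b "2 * m"] ne by simp
qed

theorem proposition5p3:
  fixes \<epsilon> q :: real and n k :: nat and \<sigma> :: "int list"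
  assumes "\<epsilon> = 1 \<or> \<epsilon> = -1"
    and "1 \<le> k" and "k \<le> n"
    and "\<sigma> \<in> D_Delta k"
  shows "(\<Sum>\<pi>\<in>{\<pi> \<in> Delta_lt n. dp \<pi> = \<sigma>}. \<epsilon> powi ellB \<pi> * q ^ fmaj \<pi>)
         = \<epsilon> powi ellB \<sigma> * q ^ (2 * (n - k) + fmaj \<sigma>) * qbinom (n - 1) (k - 1) (q\<^sup>2)"
proof -
  note e = assms(1) and k1 = assms(2) and kn = assms(3) and sD = assms(4)
  interpret sig \<sigma> k by unfold_locales (fact sD, fact k1)
  define r where "r = n - k"
  have nr: "n = k + r" using kn by (simp add: r_def)
  have S: "{\<pi> \<in> Delta_lt n. dp \<pi> = \<sigma>} = Pi ` comps k r"
  proof (intro set_eqI iffI)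
    fix \<pi> assume "\<pi> \<in> {\<pi> \<in> Delta_lt n. dp \<pi> = \<sigma>}"
    then obtain g where "length g = k" "sum_list g = n - k" "\<pi> = Pi g" using Pi_surj by blast
    then show "\<pi> \<in> Pi ` comps k r" by (auto simp: comps_def r_def)
  next
    fix \<pi> assume "\<pi> \<in> Pi ` comps k r"
    then obtain g where g: "length g = k" "sum_list g = r" "\<pi> = Pi g" by (auto simp: comps_def)
    then show "\<pi> \<in> {\<pi> \<in> Delta_lt n. dp \<pi> = \<sigma>}" using Pi_Delta[OF g(1)] dp_Pi[OF g(1)] nr by simp
  qed
  have inj: "inj_on Pi (comps k r)" by (auto simp: inj_on_def comps_def intro: Pi_inj)
  let ?x = "q\<^sup>2"
  have tm: "\<epsilon> powi ellB (Pi g) * q ^ fmaj (Pi g) = \<epsilon> powi ellB \<sigma> * q ^ neg \<sigma> * ?x ^ Mf lo dd g"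
    if g: "g \<in> comps k r" for g
  proof -
    have lg: "length g = k" using g by (simp add: comps_def)
    have "\<epsilon> powi ellB (Pi g) = \<epsilon> powi ellB \<sigma>" by (rule powi_parity[OF e parity_Pi[OF lg]])
    moreover have "fmaj (Pi g) = 2 * Mf lo dd g + neg \<sigma>"
      unfolding fmaj_def maj_Pi[OF lg] neg_Pi[OF lg] ..
    ultimately show ?thesis by (simp add: power_add power_mult)
  qed
  have lok: "lo (k - 1)"
  proof -
    have "\<sigma> ! (k - 1) \<noteq> int k" using derange[of "k-1"] k1 by simp
    moreover have "\<bar>\<sigma> ! (k - 1)\<bar> \<le> int k" using abs_range[of "k-1"] k1 by simp
    ultimately show ?thesis using k1 abs_ge_self[of "\<sigma> ! (k - 1)"] by (simp add: lo_def)
  qed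
  have "(\<Sum>\<pi>\<in>{\<pi> \<in> Delta_lt n. dp \<pi> = \<sigma>}. \<epsilon> powi ellB \<pi> * q ^ fmaj \<pi>)
      = (\<Sum>g\<in>comps k r. \<epsilon> powi ellB (Pi g) * q ^ fmaj (Pi g))"
    unfolding S by (simp add: sum.reindex[OF inj])
  also have "\<dots> = \<epsilon> powi ellB \<sigma> * q ^ neg \<sigma> * (\<Sum>g\<in>comps k r. ?x ^ Mf lo dd g)"
    by (simp add: tm sum_distrib_left)
  also have "(\<Sum>g\<in>comps k r. ?x ^ Mf lo dd g)
      = ?x ^ (pm dd k + r) * GB ?x r (k - 1)"
    using L_lemma[of ?x "k - 1" lo dd r] lo_dd_1 lo_dd_2 k1 lok by simp
  also have "GB ?x r (k - 1) = qbinom (n - 1) (k - 1) ?x"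
  proof -
    have "r + (k - 1) = n - 1" "n - 1 - (k - 1) = r" using nr k1 by auto
    then show ?thesis unfolding GB_def qbinom_def by (simp add: mult.commute)
  qed
  finally have eq: "(\<Sum>\<pi>\<in>{\<pi> \<in> Delta_lt n. dp \<pi> = \<sigma>}. \<epsilon> powi ellB \<pi> * q ^ fmaj \<pi>)
     = \<epsilon> powi ellB \<sigma> * q ^ neg \<sigma> * (?x ^ (maj_prec \<sigma> + r) * qbinom (n - 1) (k - 1) ?x)"
    unfolding pm_maj .
  have pw: "q ^ (2 * (n - k) + fmaj \<sigma>) = q ^ neg \<sigma> * ?x ^ (maj_prec \<sigma> + r)"
    unfolding fmaj_def r_def by (simp add: power_add power_mult[symmetric] mult_ac)
  show ?thesis unfolding eq pw by (simp add: mult_ac)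
qed


end
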